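(* Suppose $\xi$ is an $\mathcal{S}$-shrinking point of the map $f$, where $\mathcal{S}=\mathcal{F}[\ell,m,n]$, and let $\{y_i\}$ be the $\mathcal{S}^{\overline0}$-cycle. Then (i) $\{y_i\}$ is both an $\mathcal{S}$-cycle and an $\mathcal{S}^{(-d)}$-cycle; (ii) $I-M_{\mathcal{S}}$ is singular; (iii) $P_{\mathcal{S}^{(i)}}$ is singular for all $i$.
   Context: Fix $N\ge2$. For $\mu\in\mathbb{R}$ and a parameter $\xi$, let $f:\mathbb{R}^N\to\mathbb{R}^N$, $f(x)=A_Lx+B\mu$ if $e_1^{\mathsf T}x\le0$, $f(x)=A_Rx+B\mu$ if $e_1^{\mathsf T}x\ge0$, with $A_L,A_R$ real $N\times N$ matrices, $B\in\mathbb{R}^N$ (depending on $\xi$), and $A_R=A_L+Ce_1^{\mathsf T}$ for some $C\in\mathbb{R}^N$. $f^L(x)=A_Lx+B\mu$, $f^R(x)=A_Rx+B\mu$, $\varrho^{\mathsf T}=e_1^{\mathsf T}\mathrm{adj}(I-A_L)$. A periodic sequence $\mathcal{S}:\mathbb{Z}\to\{L,R\}$ of period $n$ is identified with $\mathcal{S}_0\cdots\mathcal{S}_{n-1}$; indices mod $n$; $\mathcal{S}^{(j)}_i=\mathcal{S}_{i+j}$; $\mathcal{S}^{\overline j}$ differs from $\mathcal{S}$ exactly at indices $\equiv j$. $M_{\mathcal{S}}=A_{\mathcal{S}_{n-1}}\cdots A_{\mathcal{S}_0}$, $P_{\mathcal{S}}=I+A_{\mathcal{S}_{n-1}}+A_{\mathcal{S}_{n-1}}A_{\mathcal{S}_{n-2}}+\cdots+A_{\mathcal{S}_{n-1}}\cdots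 A_{\mathcal{S}_1}$. An $\mathcal{S}$-cycle is $(x_0,\dots,x_{n-1})$ with $x_{(i+1)\bmod n}=f^{\mathcal{S}_i}(x_i)$ for all $i$ (indices of the cycle mod $n$); it is admissible if $e_1^{\mathsf T}x_i\le0$ whenever $\mathcal{S}_i=L$ and $\ge0$ whenever $\mathcal{S}_i=R$. For positive integers $\ell<n$, $m<n$, $\gcd(m,n)=1$: $\mathcal{F}[\ell,m,n]_i=L$ if $im\bmod n<\ell$, $R$ otherwise; $d$ is the inverse of $m$ mod $n$. Definition: with $\mu\ne0$, $\varrho^{\mathsf T}B\ne0$, $\mathcal{S}=\mathcal{F}[\ell,m,n]$, $2\le\ell\le n-2$, $\xi$ is an $\mathcal{S}$-shrinking point if $\det(I-M_{\mathcal{S}^{\overline0}})\ne0$, $\det(I-M_{\mathcal{S}^{\overline{\ell d}}})\ne0$, the (unique) $\mathcal{S}^{\overline0}$-cycle is admissible, and its first coordinates $e_1^{\mathsf T}x_i$ vanish exactly for $i\equiv0$ and $i\equiv\ell d\pmod n$. *)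

theory Defs
  imports "Jordan_Normal_Form.Determinant"
begin

text \<open>Piecewise-linear continuous map on R^N (vectors of dimension N, coordinate 0 is e_1).\<close>

datatype side = L | R

fun swap_side :: "side \<Rightarrow> side" where
  "swap_side L = R" | "swap_side R = L"

definition e1 :: "nat \<Rightarrow> real vec" where
  "e1 N = unit_vec N 0"

definition outer :: "real vec \<Rightarrow> real vec \<Rightarrow> real mat" where
  "outer u v = mat (dim_vec u) (dim_vec v) (\<lambda>(i,j). u $ i * v $ j)"

definition Amat :: "real mat \<Rightarrow> real vec \<Rightarrow> nat \<Rightarrow> side \<Rightarrow> real mat" where
  "Amat AL C N s = (if s = L then AL else AL + outer C (e1 N))"

definition fpiece :: "real mat \<Rightarrow> real vec \<Rightarrow> real vec \<Rightarrow> real \<Rightarrow> nat \<Rightarrow> side \<Rightarrow> real vec \<Rightarrow> real vec" where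
  "fpiece AL C B \<mu> N s x = Amat AL C N s *\<^sub>v x + \<mu> \<cdot>\<^sub>v B"

definition rhoT :: "real mat \<Rightarrow> nat \<Rightarrow> real vec" where
  "rhoT AL N = row (adj_mat (1\<^sub>m N - AL)) 0"

text \<open>Symbol sequences Z -> {L,R}; shift S^(j) and flip S^{bar j} (period n).\<close>
type_synonym symseq = "int \<Rightarrow> side"

definition shiftS :: "symseq \<Rightarrow> int \<Rightarrow> symseq" where
  "shiftS S j = (\<lambda>i. S (i + j))"

definition flipS :: "symseq \<Rightarrow> nat \<Rightarrow> int \<Rightarrow> symseq" where
  "flipS S n j = (\<lambda>i. if i mod int n = j mod int n then swap_side (S i) else S i)"

definition Fseq :: "nat \<Rightarrow> nat \<Rightarrow> nat \<Rightarrow> symseq" where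
  "Fseq l m n = (\<lambda>i. if (i * int m) mod int n < int l then L else R)"

definition inv_mod :: "nat \<Rightarrow> nat \<Rightarrow> nat" where
  "inv_mod m n = (SOME d. d < n \<and> (d * m) mod n = 1)"

fun Mprod :: "real mat \<Rightarrow> real vec \<Rightarrow> nat \<Rightarrow> symseq \<Rightarrow> nat \<Rightarrow> real mat" where
  "Mprod AL C N S 0 = 1\<^sub>m N"
| "Mprod AL C N S (Suc k) = Amat AL C N (S (int k)) * Mprod AL C N S k"

definition Mmat :: "real mat \<Rightarrow> real vec \<Rightarrow> nat \<Rightarrow> symseq \<Rightarrow> nat \<Rightarrow> real mat" where
  "Mmat AL C N S n = Mprod AL C N S n"

fun Ptop :: "real mat \<Rightarrow> real vec \<Rightarrow> nat \<Rightarrow> symseq \<Rightarrow> nat \<Rightarrow> nat \<Rightarrow> real mat" where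
  "Ptop AL C N S n 0 = 1\<^sub>m N"
| "Ptop AL C N S n (Suc k) = Ptop AL C N S n k * Amat AL C N (S (int n - 1 - int k))"

fun Psum :: "real mat \<Rightarrow> real vec \<Rightarrow> nat \<Rightarrow> symseq \<Rightarrow> nat \<Rightarrow> nat \<Rightarrow> real mat" where
  "Psum AL C N S n 0 = 0\<^sub>m N N"
| "Psum AL C N S n (Suc k) = Psum AL C N S n k + Ptop AL C N S n k"

text \<open>P_S = I + A_{S_{n-1}} + ... + A_{S_{n-1}} ... A_{S_1}\<close>
definition Pmat :: "real mat \<Rightarrow> real vec \<Rightarrow> nat \<Rightarrow> symseq \<Rightarrow> nat \<Rightarrow> real mat" where
  "Pmat AL C N S n = Psum AL C N S n n"

definition is_cycle :: "real mat \<Rightarrow> real vec \<Rightarrow> real vec \<Rightarrow> real \<Rightarrow> nat \<Rightarrow> symseq \<Rightarrow> nat \<Rightarrow> (nat \<Rightarrow> real vec) \<Rightarrow> bool" where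
  "is_cycle AL C B \<mu> N S n x \<longleftrightarrow>
     (\<forall>i<n. x i \<in> carrier_vec N) \<and>
     (\<forall>i<n. x ((i + 1) mod n) = fpiece AL C B \<mu> N (S (int i)) (x i))"

definition admissible :: "symseq \<Rightarrow> nat \<Rightarrow> (nat \<Rightarrow> real vec) \<Rightarrow> bool" where
  "admissible S n x \<longleftrightarrow>
     (\<forall>i<n. (S (int i) = L \<longrightarrow> x i $ 0 \<le> 0) \<and> (S (int i) = R \<longrightarrow> x i $ 0 \<ge> 0))"

definition shrinking_point :: "real mat \<Rightarrow> real vec \<Rightarrow> real vec \<Rightarrow> real \<Rightarrow> nat \<Rightarrow> nat \<Rightarrow> nat \<Rightarrow> nat \<Rightarrow> bool" where
  "shrinking_point AL C B \<mu> N l m n \<longleftrightarrow>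
     (let S = Fseq l m n; d = inv_mod m n in
      0 < m \<and> m < n \<and> coprime m n \<and> 2 \<le> l \<and> l + 2 \<le> n \<and>
      \<mu> \<noteq> 0 \<and> rhoT AL N \<bullet> B \<noteq> 0 \<and>
      det (1\<^sub>m N - Mmat AL C N (flipS S n 0) n) \<noteq> 0 \<and>
      det (1\<^sub>m N - Mmat AL C N (flipS S n (int (l * d))) n) \<noteq> 0 \<and>
      (\<exists>y. is_cycle AL C B \<mu> N (flipS S n 0) n y \<and>
           admissible (flipS S n 0) n y \<and>
           (\<forall>i<n. y i $ 0 = 0 \<longleftrightarrow> (i mod n = 0 \<or> i mod n = (l * d) mod n))))"

end

theory Submission
  imports Defs
begin

lemma e1_carrier[simp]: "e1 N \<in> carrier_vec N" unfolding e1_def by simp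

lemma outer_carrier[simp]: "u \<in> carrier_vec N \<Longrightarrow> v \<in> carrier_vec N' \<Longrightarrow> outer u v \<in> carrier_mat N N'"
  unfolding outer_def by auto

lemma Amat_carrier[simp]: "AL \<in> carrier_mat N N \<Longrightarrow> C \<in> carrier_vec N \<Longrightarrow> Amat AL C N s \<in> carrier_mat N N"
  unfolding Amat_def by auto

lemma outer_mult_vec: assumes "u \<in> carrier_vec N" "v \<in> carrier_vec N" "x \<in> carrier_vec N"
  shows "outer u v *\<^sub>v x = (v \<bullet> x) \<cdot>\<^sub>v u"
proof (rule eq_vecI)
  fix i assume i: "i < dim_vec ((v \<bullet> x) \<cdot>\<^sub>v u)"
  have "(outer u v *\<^sub>v x) $ i = (\<Sum>j<N. u $ i * v $ j * x $ j)"
    using assms i unfolding outer_def by (auto simp: scalar_prod_def row_def atLeast0LessThan)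
  also have "\<dots> = u $ i * (\<Sum>j<N. v $ j * x $ j)" by (simp add: sum_distrib_left mult.assoc)
  finally show "(outer u v *\<^sub>v x) $ i = ((v \<bullet> x) \<cdot>\<^sub>v u) $ i"
    using assms i by (simp add: scalar_prod_def atLeast0LessThan mult.commute)
qed (use assms in \<open>auto simp: outer_def\<close>)

lemma e1_dot: "x \<in> carrier_vec N \<Longrightarrow> 0 < N \<Longrightarrow> e1 N \<bullet> x = x $ 0"
  unfolding e1_def by simp

lemma fpiece_carrier[simp]: "AL \<in> carrier_mat N N \<Longrightarrow> C \<in> carrier_vec N \<Longrightarrow> B \<in> carrier_vec N \<Longrightarrow>
   x \<in> carrier_vec N \<Longrightarrow> fpiece AL C B \<mu> N s x \<in> carrier_vec N"
  unfolding fpiece_def by (metis Amat_carrier add_carrier_vec mult_mat_vec_carrier smult_carrier_vec)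

lemma Amat_zero: assumes "AL \<in> carrier_mat N N" "C \<in> carrier_vec N" "x \<in> carrier_vec N" "0 < N" "x $ 0 = 0"
  shows "Amat AL C N s *\<^sub>v x = AL *\<^sub>v x"
proof (cases s)
  case R
  have "Amat AL C N s *\<^sub>v x = AL *\<^sub>v x + outer C (e1 N) *\<^sub>v x"
    using assms R unfolding Amat_def by (auto simp: add_mult_distrib_mat_vec)
  also have "outer C (e1 N) *\<^sub>v x = 0\<^sub>v N"
    using assms by (auto simp add: outer_mult_vec e1_dot)
  finally show ?thesis using assms by simp
qed (simp add: Amat_def)

lemma fpiece_LR: assumes "AL \<in> carrier_mat N N" "C \<in> carrier_vec N" "x \<in> carrier_vec N" "0 < N" "x $ 0 = 0"
  shows "fpiece AL C B \<mu> N s x = fpiece AL C B \<mu> N s' x"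
  unfolding fpiece_def using Amat_zero[OF assms] by simp

lemma cycle_change:
  assumes AL: "AL \<in> carrier_mat N N" and Cc: "C \<in> carrier_vec N" and N0: "0 < N"
    and cyc: "is_cycle AL C B \<mu> N S n x"
    and diff: "\<forall>i<n. S' (int i) \<noteq> S (int i) \<longrightarrow> x i $ 0 = 0"
  shows "is_cycle AL C B \<mu> N S' n x"
  unfolding is_cycle_def
proof (intro conjI allI impI)
  fix i assume i: "i < n"
  show "x i \<in> carrier_vec N" using cyc i unfolding is_cycle_def by auto
  show "x ((i + 1) mod n) = fpiece AL C B \<mu> N (S' (int i)) (x i)"
  proof (cases "S' (int i) = S (int i)")
    case True then show ?thesis using cyc i unfolding is_cycle_def by auto
  next
    case False
    then have "x i $ 0 = 0" using diff i by auto
    then have "fpiece AL C B \<mu> N (S' (int i)) (x i) = fpiece AL C B \<mu> N (S (int i)) (x i)"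
      using fpiece_LR[OF AL Cc _ N0] cyc i unfolding is_cycle_def by blast
    then show ?thesis using cyc i unfolding is_cycle_def by auto
  qed
qed

lemma Mprod_carrier[simp]: "AL \<in> carrier_mat N N \<Longrightarrow> C \<in> carrier_vec N \<Longrightarrow> Mprod AL C N S k \<in> carrier_mat N N"
  by (induction k) (auto intro!: mult_carrier_mat[of _ N N _ N])

lemma cycle_shift:
  assumes per: "\<forall>i j. i mod int n = j mod int n \<longrightarrow> S i = S j" and n0: "0<n"
   and cyc: "is_cycle AL C B \<mu> N (shiftS S a) n y"
  shows "is_cycle AL C B \<mu> N (shiftS S (a + int b)) n (\<lambda>k. y ((k + b) mod n))"
  unfolding is_cycle_def
proof (intro conjI allI impI)
  fix k assume k: "k < n"
  show "y ((k + b) mod n) \<in> carrier_vec N" using cyc n0 unfolding is_cycle_def by auto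
  define j where "j = (k + b) mod n"
  have j: "j < n" using n0 j_def by auto
  have e1: "((k + 1) mod n + b) mod n = (j + 1) mod n" unfolding j_def
    by (metis add.commute add.left_commute mod_add_left_eq)
  have "int j mod int n = (int k + int b) mod int n" unfolding j_def by (simp add: zmod_int)
  then have "(int j + a) mod int n = (int k + (a + int b)) mod int n"
    by (metis add.commute add.left_commute mod_add_left_eq)
  then have "shiftS S a (int j) = shiftS S (a + int b) (int k)"
    unfolding shiftS_def using per[rule_format, of "int j + a" "int k + (a + int b)"] by (simp add: ac_simps)
  then show "y (((k + 1) mod n + b) mod n) = fpiece AL C B \<mu> N (shiftS S (a + int b) (int k)) (y ((k + b) mod n))"
    using cyc j unfolding e1 is_cycle_def j_def[symmetric] by auto
qed

lemma mat_vec_zero[simp]: "A \<in> carrier_mat N N' \<Longrightarrow> A *\<^sub>v 0\<^sub>v N' = 0\<^sub>v N"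
  by (rule eq_vecI) auto

lemma hom_iter:
  assumes AL: "AL \<in> carrier_mat N N" and Cc: "C \<in> carrier_vec N"
    and wc: "\<forall>i<n. w i \<in> carrier_vec N"
    and ws: "\<forall>i<n. w ((i+1) mod n) = Amat AL C N (S (int i)) *\<^sub>v w i"
    and n0: "0<n"
  shows "k \<le> n \<Longrightarrow> w (k mod n) = Mprod AL C N S k *\<^sub>v w 0"
proof (induction k)
  case 0 then show ?case using wc n0 by auto
next
  case (Suc k)
  then have k: "k < n" by auto
  have "w (Suc k mod n) = Amat AL C N (S (int k)) *\<^sub>v w k" using ws k by auto
  also have "w k = Mprod AL C N S k *\<^sub>v w 0" using Suc k by auto
  finally show ?case using AL Cc wc n0
    by (simp add: assoc_mult_mat_vec[of _ N N _ N])
qed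

lemma cycle_diff:
  assumes AL: "AL \<in> carrier_mat N N" and Cc: "C \<in> carrier_vec N" and Bc: "B \<in> carrier_vec N"
    and x: "is_cycle AL C B \<mu> N S n x" and x': "is_cycle AL C B \<mu> N S n x'"
  shows "\<forall>i<n. (\<lambda>i. x i - x' i) ((i+1) mod n) = Amat AL C N (S (int i)) *\<^sub>v (x i - x' i)"
proof (intro allI impI)
  fix i assume i: "i < n"
  have c: "x i \<in> carrier_vec N" "x' i \<in> carrier_vec N" using x x' i unfolding is_cycle_def by auto
  have "x ((i+1) mod n) - x' ((i+1) mod n) = fpiece AL C B \<mu> N (S (int i)) (x i) - fpiece AL C B \<mu> N (S (int i)) (x' i)"
    using x x' i unfolding is_cycle_def by auto
  also have "\<dots> = Amat AL C N (S (int i)) *\<^sub>v x i - Amat AL C N (S (int i)) *\<^sub>v x' i"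
  proof -
    have Ac: "Amat AL C N (S (int i)) \<in> carrier_mat N N" using AL Cc by simp
    show ?thesis unfolding fpiece_def by (intro eq_vecI) (use c carrier_matD[OF Ac] Bc in auto)
  qed
  also have "\<dots> = Amat AL C N (S (int i)) *\<^sub>v (x i - x' i)"
    using c AL Cc by (intro mult_minus_distrib_mat_vec[symmetric, of _ N N]) auto
  finally show "(\<lambda>i. x i - x' i) ((i+1) mod n) = Amat AL C N (S (int i)) *\<^sub>v (x i - x' i)" by simp
qed

lemma cycle_unique:
  assumes AL: "AL \<in> carrier_mat N N" and Cc: "C \<in> carrier_vec N" and Bc: "B \<in> carrier_vec N"
    and x: "is_cycle AL C B \<mu> N S n x" and x': "is_cycle AL C B \<mu> N S n x'"
    and n0: "0 < n" and dt: "det (1\<^sub>m N - Mmat AL C N S n) \<noteq> 0"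
  shows "\<forall>i<n. x i = x' i"
proof -
  define w where "w = (\<lambda>i. x i - x' i)"
  have wc: "\<forall>i<n. w i \<in> carrier_vec N" using x x' unfolding is_cycle_def w_def by auto
  have ws: "\<forall>i<n. w ((i+1) mod n) = Amat AL C N (S (int i)) *\<^sub>v w i"
    using cycle_diff[OF AL Cc Bc x x'] unfolding w_def by auto
  note it = hom_iter[OF AL Cc wc ws n0]
  have w0: "w 0 \<in> carrier_vec N" using wc n0 by auto
  have Mc: "Mmat AL C N S n \<in> carrier_mat N N" unfolding Mmat_def using AL Cc by simp
  have eq: "Mmat AL C N S n *\<^sub>v w 0 = w 0" using it[of n] unfolding Mmat_def by simp
  have "(1\<^sub>m N - Mmat AL C N S n) *\<^sub>v w 0 = 1\<^sub>m N *\<^sub>v w 0 - Mmat AL C N S n *\<^sub>v w 0"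
    using Mc w0 by (intro minus_mult_distrib_mat_vec) auto
  also have "\<dots> = 0\<^sub>v N" unfolding eq using w0 by simp
  finally have z: "(1\<^sub>m N - Mmat AL C N S n) *\<^sub>v w 0 = 0\<^sub>v N" .
  have Kc: "1\<^sub>m N - Mmat AL C N S n \<in> carrier_mat N N" using Mc by (rule minus_carrier_mat)
  have "w 0 = 0\<^sub>v N" using det_0_iff_vec_prod_zero[OF Kc] dt w0 z by blast
  show ?thesis
  proof (intro allI impI)
    fix i assume i: "i < n"
    have "w i = Mprod AL C N S i *\<^sub>v w 0" using it[of i] i by simp
    then have "w i = 0\<^sub>v N" using \<open>w 0 = 0\<^sub>v N\<close> AL Cc mat_vec_zero[OF Mprod_carrier[OF AL Cc]] by simp
    moreover have "x i \<in> carrier_vec N" "x' i \<in> carrier_vec N" using x x' i unfolding is_cycle_def by auto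
    ultimately show "x i = x' i" unfolding w_def
      by (metis eq_vecI carrier_vecD index_minus_vec(1) index_zero_vec(1) eq_iff_diff_eq_0)
  qed
qed

fun Qr :: "real mat \<Rightarrow> real vec \<Rightarrow> nat \<Rightarrow> symseq \<Rightarrow> nat \<Rightarrow> real mat" where
  "Qr AL C N S 0 = 0\<^sub>m N N"
| "Qr AL C N S (Suc k) = Amat AL C N (S (int k)) * Qr AL C N S k + 1\<^sub>m N"

lemma zero_mat_vec[simp]: "v \<in> carrier_vec N' \<Longrightarrow> 0\<^sub>m N N' *\<^sub>v v = 0\<^sub>v N"
  by (rule eq_vecI) (auto simp: scalar_prod_def row_def)

lemma add3: "(X::real mat) \<in> carrier_mat N N \<Longrightarrow> Y \<in> carrier_mat N N \<Longrightarrow> Z \<in> carrier_mat N N \<Longrightarrow> X + Z + Y = X + Y + Z"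
  by (rule eq_matI) auto

lemma Qr_carrier[simp]: "AL \<in> carrier_mat N N \<Longrightarrow> C \<in> carrier_vec N \<Longrightarrow> Qr AL C N S k \<in> carrier_mat N N"
  by (induction k) (auto intro!: mult_carrier_mat[of _ N N _ N] add_carrier_mat)

lemma Ptop_carrier[simp]: "AL \<in> carrier_mat N N \<Longrightarrow> C \<in> carrier_vec N \<Longrightarrow> Ptop AL C N S t k \<in> carrier_mat N N"
  by (induction k) (auto intro!: mult_carrier_mat[of _ N N _ N])

lemma Psum_carrier[simp]: "AL \<in> carrier_mat N N \<Longrightarrow> C \<in> carrier_vec N \<Longrightarrow> Psum AL C N S t k \<in> carrier_mat N N"
  by (induction k) (auto intro!: add_carrier_mat)

lemma Ptop_top:
  assumes AL: "AL \<in> carrier_mat N N" and Cc: "C \<in> carrier_vec N"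
  shows "Ptop AL C N S (Suc t) (Suc j) = Amat AL C N (S (int t)) * Ptop AL C N S t j"
proof (induction j)
  case 0
  have "Amat AL C N (S (int t)) \<in> carrier_mat N N" using AL Cc by simp
  then show ?case by simp
next
  case (Suc j)
  have e: "int (Suc t) - 1 - int (Suc j) = int t - 1 - int j" by simp
  have "Ptop AL C N S (Suc t) (Suc (Suc j)) = Ptop AL C N S (Suc t) (Suc j) * Amat AL C N (S (int t - 1 - int j))"
    by (simp only: Ptop.simps e)
  also have "\<dots> = Amat AL C N (S (int t)) * Ptop AL C N S t j * Amat AL C N (S (int t - 1 - int j))"
    using Suc by simp
  also have "\<dots> = Amat AL C N (S (int t)) * Ptop AL C N S t (Suc j)"
    using AL Cc by (simp, intro assoc_mult_mat[of _ N N _ N _ N]) auto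
  finally show ?case .
qed

lemma Psum_top:
  assumes AL: "AL \<in> carrier_mat N N" and Cc: "C \<in> carrier_vec N"
  shows "Psum AL C N S (Suc t) (Suc j) = Amat AL C N (S (int t)) * Psum AL C N S t j + 1\<^sub>m N"
proof (induction j)
  case 0
  have "Amat AL C N (S (int t)) \<in> carrier_mat N N" using AL Cc by simp
  then show ?case by simp
next
  case (Suc j)
  define A where "A = Amat AL C N (S (int t))"
  have Ac: "A \<in> carrier_mat N N" using AL Cc A_def by simp
  have "Psum AL C N S (Suc t) (Suc (Suc j)) = Psum AL C N S (Suc t) (Suc j) + Ptop AL C N S (Suc t) (Suc j)"
    by simp
  also have "\<dots> = (A * Psum AL C N S t j + 1\<^sub>m N) + A * Ptop AL C N S t j"
    using Suc Ptop_top[OF AL Cc] A_def by simp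
  also have "\<dots> = (A * Psum AL C N S t j + A * Ptop AL C N S t j) + 1\<^sub>m N"
  proof -
    have c1: "A * Psum AL C N S t j \<in> carrier_mat N N" "A * Ptop AL C N S t j \<in> carrier_mat N N"
      using Ac AL Cc by (auto intro!: mult_carrier_mat[of _ N N _ N])
    show ?thesis using add3[OF c1(1) c1(2) one_carrier_mat] .
  qed
  also have "A * Psum AL C N S t j + A * Ptop AL C N S t j = A * (Psum AL C N S t j + Ptop AL C N S t j)"
    using Ac AL Cc by (intro mult_add_distrib_mat[symmetric, of _ N N _ N]) auto
  finally show ?case unfolding A_def by simp
qed

lemma Psum_Qr:
  assumes AL: "AL \<in> carrier_mat N N" and Cc: "C \<in> carrier_vec N"
  shows "Psum AL C N S k k = Qr AL C N S k"
proof (induction k)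
  case (Suc k)
  then show ?case using Psum_top[OF AL Cc, of S k k] by simp
qed simp

lemma cyc_iter:
  assumes AL: "AL \<in> carrier_mat N N" and Cc: "C \<in> carrier_vec N" and Bc: "B \<in> carrier_vec N"
    and x: "is_cycle AL C B \<mu> N S n x" and n0: "0 < n"
  shows "k \<le> n \<Longrightarrow> x (k mod n) = Mprod AL C N S k *\<^sub>v x 0 + Qr AL C N S k *\<^sub>v (\<mu> \<cdot>\<^sub>v B)"
proof (induction k)
  case 0
  have "x 0 \<in> carrier_vec N" using x n0 unfolding is_cycle_def by auto
  then show ?case using Bc by simp
next
  case (Suc k)
  then have k: "k < n" by auto
  define A where "A = Amat AL C N (S (int k))"
  define M where "M = Mprod AL C N S k"
  define Q where "Q = Qr AL C N S k"
  define b where "b = \<mu> \<cdot>\<^sub>v B"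
  have Ac: "A \<in> carrier_mat N N" "M \<in> carrier_mat N N" "Q \<in> carrier_mat N N" "b \<in> carrier_vec N"
    using AL Cc Bc unfolding A_def M_def Q_def b_def by auto
  have x0: "x 0 \<in> carrier_vec N" using x n0 unfolding is_cycle_def by auto
  have "x (Suc k mod n) = A *\<^sub>v x k + b" using x k unfolding is_cycle_def fpiece_def A_def b_def by auto
  also have "x k = M *\<^sub>v x 0 + Q *\<^sub>v b" using Suc k unfolding M_def Q_def b_def by simp
  also have "A *\<^sub>v (M *\<^sub>v x 0 + Q *\<^sub>v b) + b = (A * M) *\<^sub>v x 0 + (A * Q + 1\<^sub>m N) *\<^sub>v b"
    using Ac x0
    by (simp add: mult_add_distrib_mat_vec[of _ N N] add_mult_distrib_mat_vec[of _ N N])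
      (rule assoc_add_vec; auto intro!: mult_mat_vec_carrier[of _ N N])
  finally show ?case unfolding A_def M_def Q_def b_def by simp
qed

lemma decomp:
  assumes AL: "AL \<in> carrier_mat N N" and Cc: "C \<in> carrier_vec N"
    and v: "v \<in> carrier_vec N" and v0: "v $ 0 = 0" and N0: "0 < N"
  shows "(1\<^sub>m N - Mprod AL C N S k) *\<^sub>v v = Qr AL C N S k *\<^sub>v ((1\<^sub>m N - AL) *\<^sub>v v)"
proof (induction k)
  case 0
  have "(1\<^sub>m N - 1\<^sub>m N) *\<^sub>v v = 1\<^sub>m N *\<^sub>v v - 1\<^sub>m N *\<^sub>v v"
    using v by (intro minus_mult_distrib_mat_vec) auto
  moreover have "(1\<^sub>m N - AL) *\<^sub>v v \<in> carrier_vec N" using v AL by (auto intro!: mult_mat_vec_carrier)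
  ultimately show ?case using v AL by simp
next
  case (Suc k)
  define A where "A = Amat AL C N (S (int k))"
  define M where "M = Mprod AL C N S k"
  define Q where "Q = Qr AL C N S k"
  have Ac: "A \<in> carrier_mat N N" "M \<in> carrier_mat N N" "Q \<in> carrier_mat N N"
    using AL Cc unfolding A_def M_def Q_def by auto
  have Av: "A *\<^sub>v v = AL *\<^sub>v v" unfolding A_def using Amat_zero[OF AL Cc v N0 v0] .
  have IH: "v - M *\<^sub>v v = Q *\<^sub>v (v - AL *\<^sub>v v)"
    using Suc Ac AL v unfolding M_def Q_def
    by (simp add: minus_mult_distrib_mat_vec[of _ N N])
  have "(1\<^sub>m N - A * M) *\<^sub>v v = v - A *\<^sub>v (M *\<^sub>v v)"
    using Ac v by (simp add: minus_mult_distrib_mat_vec[of _ N N])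
  also have "\<dots> = (A *\<^sub>v v - A *\<^sub>v (M *\<^sub>v v)) + (v - AL *\<^sub>v v)"
    unfolding Av using Ac v AL by (intro eq_vecI) auto
  also have "A *\<^sub>v v - A *\<^sub>v (M *\<^sub>v v) = A *\<^sub>v (Q *\<^sub>v (v - AL *\<^sub>v v))"
    unfolding IH[symmetric] using Ac v by (simp add: mult_minus_distrib_mat_vec[of _ N N])
  also have "A *\<^sub>v (Q *\<^sub>v (v - AL *\<^sub>v v)) + (v - AL *\<^sub>v v) = (A * Q + 1\<^sub>m N) *\<^sub>v ((1\<^sub>m N - AL) *\<^sub>v v)"
    using Ac v AL by (simp add: add_mult_distrib_mat_vec[of _ N N] minus_mult_distrib_mat_vec[of _ N N])
  finally show ?case unfolding A_def M_def Q_def by simp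
qed

lemma mat_vec_unit: "(A :: real mat) \<in> carrier_mat N N \<Longrightarrow> i < N \<Longrightarrow> j < N \<Longrightarrow> (A *\<^sub>v unit_vec N j) $ i = A $$ (i,j)"
proof -
  assume A: "A \<in> carrier_mat N N" and i: "i < N" and j: "j < N"
  have "row A i \<bullet> unit_vec N j = row A i $ j" using j by (rule scalar_prod_right_unit)
  then show ?thesis using A i j by (simp add: carrier_matD)
qed

lemma adj_row0_eq:
  assumes X: "X \<in> carrier_mat N N" and Y: "Y \<in> carrier_mat N N"
   and eq: "\<And>i j. i < N \<Longrightarrow> 0 < j \<Longrightarrow> j < N \<Longrightarrow> X $$ (i,j) = Y $$ (i,j)" and N0: "0 < N"
  shows "row (adj_mat X) 0 = row (adj_mat Y) 0"
proof (rule eq_vecI)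
  fix j assume "j < dim_vec (row (adj_mat Y) 0)"
  then have j: "j < N" using Y adj_mat(1)[OF Y] by auto
  have md: "mat_delete X j 0 = mat_delete Y j 0"
    unfolding mat_delete_def using X Y by (intro eq_matI) (auto intro!: eq)
  show "row (adj_mat X) 0 $ j = row (adj_mat Y) 0 $ j"
    using X Y j N0 md unfolding adj_mat_def cofactor_def by simp
qed (use X Y adj_mat(1)[OF X] adj_mat(1)[OF Y] in auto)

lemma vec_diff_eq: "u \<in> carrier_vec N \<Longrightarrow> w \<in> carrier_vec N \<Longrightarrow> x = u + w \<Longrightarrow> x - u = (w :: real vec)"
  by (intro eq_vecI) auto

lemma two_cycles_P:
  assumes AL: "AL \<in> carrier_mat N N" and Cc: "C \<in> carrier_vec N" and Bc: "B \<in> carrier_vec N"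
    and N0: "0 < N" and n0: "0 < n" and mu: "\<mu> \<noteq> 0" and rho: "rhoT AL N \<bullet> B \<noteq> 0"
    and x: "is_cycle AL C B \<mu> N S n x" and x': "is_cycle AL C B \<mu> N S n x'"
    and k: "k < n" and ne: "x k \<noteq> x' k"
  shows "det (1\<^sub>m N - Mmat AL C N S n) = 0 \<and> det (Pmat AL C N S n) = 0"
proof
  show dK: "det (1\<^sub>m N - Mmat AL C N S n) = 0"
    using cycle_unique[OF AL Cc Bc x x' n0] k ne by blast
  define M where "M = Mprod AL C N S n"
  define P where "P = Qr AL C N S n"
  define K where "K = 1\<^sub>m N - M"
  define b where "b = \<mu> \<cdot>\<^sub>v B"
  have PP: "Pmat AL C N S n = P" unfolding Pmat_def P_def using Psum_Qr[OF AL Cc] .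
  have Mc: "M \<in> carrier_mat N N" and Pc: "P \<in> carrier_mat N N" and Kc: "K \<in> carrier_mat N N"
    and bc: "b \<in> carrier_vec N"
    using AL Cc Bc unfolding M_def P_def K_def b_def by (auto intro: minus_carrier_mat)
  have x0: "x 0 \<in> carrier_vec N" using x n0 unfolding is_cycle_def by auto
  have dK': "det K = 0" using dK unfolding K_def M_def Mmat_def .
  show "det (Pmat AL C N S n) = 0"
  proof (rule ccontr)
    assume "det (Pmat AL C N S n) \<noteq> 0"
    then have p: "det P \<noteq> 0" unfolding PP .
    define Q where "Q = (1 / det P) \<cdot>\<^sub>m adj_mat P"
    have Qc: "Q \<in> carrier_mat N N" unfolding Q_def using adj_mat(1)[OF Pc] by simp
    have QP: "Q * P = 1\<^sub>m N"
    proof -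
      have "Q * P = (1 / det P) \<cdot>\<^sub>m (adj_mat P * P)"
        unfolding Q_def using adj_mat(1)[OF Pc] Pc by (rule mult_smult_assoc_mat)
      also have "\<dots> = 1\<^sub>m N" unfolding adj_mat(3)[OF Pc] using p by (intro eq_matI) auto
      finally show ?thesis .
    qed
    define X where "X = Q * K"
    have Xc: "X \<in> carrier_mat N N" unfolding X_def using Qc Kc by simp
    have it: "x 0 = M *\<^sub>v x 0 + P *\<^sub>v b"
      using cyc_iter[OF AL Cc Bc x n0, of n] unfolding M_def P_def b_def by simp
    have Kx: "K *\<^sub>v x 0 = P *\<^sub>v b"
    proof -
      have "K *\<^sub>v x 0 = 1\<^sub>m N *\<^sub>v x 0 - M *\<^sub>v x 0"
        unfolding K_def using Mc x0 by (intro minus_mult_distrib_mat_vec) auto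
      also have "\<dots> = P *\<^sub>v b" using vec_diff_eq[OF _ _ it, of N] Mc Pc x0 bc by (simp add: mult_mat_vec_carrier)
      finally show ?thesis .
    qed
    have Xx: "X *\<^sub>v x 0 = b"
      unfolding X_def using Qc Kc x0 Kx Pc bc
      by (simp add: assoc_mult_mat_vec[symmetric, of Q N N P N b] QP)
    have Xv: "X *\<^sub>v v = (1\<^sub>m N - AL) *\<^sub>v v" if v: "v \<in> carrier_vec N" "v $ 0 = 0" for v
    proof -
      have "K *\<^sub>v v = P *\<^sub>v ((1\<^sub>m N - AL) *\<^sub>v v)"
        unfolding K_def M_def P_def using decomp[OF AL Cc v N0] .
      moreover have "(1\<^sub>m N - AL) *\<^sub>v v \<in> carrier_vec N" using AL v by (auto intro!: mult_mat_vec_carrier)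
      ultimately show ?thesis
        unfolding X_def using Qc Kc v Pc
        by (simp add: assoc_mult_mat_vec[symmetric, of Q N N P N] QP)
    qed
    have Xe: "X $$ (i,j) = (1\<^sub>m N - AL) $$ (i,j)" if "i < N" "0 < j" "j < N" for i j
    proof -
      have "X $$ (i,j) = (X *\<^sub>v unit_vec N j) $ i" using Xc that by simp
      also have "\<dots> = ((1\<^sub>m N - AL) *\<^sub>v unit_vec N j) $ i" using Xv[of "unit_vec N j"] that N0 by simp
      also have "\<dots> = (1\<^sub>m N - AL) $$ (i,j)" using AL that by simp
      finally show ?thesis .
    qed
    have row0: "row (adj_mat X) 0 = rhoT AL N"
      unfolding rhoT_def using adj_row0_eq[OF Xc minus_carrier_mat[OF AL] Xe N0] by simp
    have dX: "det X = 0" unfolding X_def using det_mult[OF Qc Kc] dK' by simp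
    have adjc: "adj_mat X \<in> carrier_mat N N" using adj_mat(1)[OF Xc] .
    have "(adj_mat X *\<^sub>v (X *\<^sub>v x 0)) $ 0 = ((adj_mat X * X) *\<^sub>v x 0) $ 0"
      using adjc Xc x0 by simp
    also have "\<dots> = 0" unfolding adj_mat(3)[OF Xc] dX using x0 N0 by simp
    finally have z: "(adj_mat X *\<^sub>v (X *\<^sub>v x 0)) $ 0 = 0" .
    have "(adj_mat X *\<^sub>v (X *\<^sub>v x 0)) $ 0 = rhoT AL N \<bullet> b"
      unfolding Xx using adjc N0 row0 by simp
    also have "\<dots> = \<mu> * (rhoT AL N \<bullet> B)" unfolding b_def
    proof (rule scalar_prod_smult_right)
      have "dim_vec (rhoT AL N) = N" unfolding row0[symmetric] using adjc by simp
      then show "dim_vec (rhoT AL N) = dim_vec B" using Bc by simp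
    qed
    finally show False using z mu rho by simp
  qed
qed

lemma Fseq_per: "i mod int n = j mod int n \<Longrightarrow> Fseq l m n i = Fseq l m n j"
  unfolding Fseq_def by (metis mod_mult_left_eq)

lemma inv_mod_spec:
  assumes "coprime m n" "0 < m" "1 < n"
  shows "inv_mod m n < n \<and> (inv_mod m n * m) mod n = 1"
proof -
  obtain x y where xy: "m * x = n * y + gcd m n" using bezout_nat[of m n] assms by auto
  then have xy: "m * x = n * y + 1" using assms by simp
  have "(x mod n * m) mod n = 1"
    by (metis xy assms(3) mod_mult_left_eq mult.commute mod_mult_self2 mod_less add.commute)
  then have "\<exists>d. d < n \<and> (d * m) mod n = 1" using assms by (intro exI[of _ "x mod n"]) auto
  then show ?thesis unfolding inv_mod_def by (rule someI_ex)
qed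

lemma F_shift_diff:
  assumes d: "(d * m) mod n = 1" and cop: "coprime m n" and n1: "1 < n"
    and l: "l < n" and i: "i < n" and i0: "i \<noteq> 0"
    and ne: "Fseq l m n (int i - int d) \<noteq> Fseq l m n (int i)"
  shows "i = (l * d) mod n"
proof -
  define r where "r = (int i * int m) mod int n"
  have r0: "0 \<le> r" "r < int n" unfolding r_def using n1 by auto
  have "r \<noteq> 0"
  proof
    assume "r = 0"
    then have "int n dvd int i * int m" unfolding r_def by auto
    then have "n dvd i * m" by (metis of_nat_dvd_iff of_nat_mult)
    then have "n dvd i" using cop by (metis coprime_commute coprime_dvd_mult_left_iff)
    then show False using i i0 by auto
  qed
  have dm: "(int d * int m) mod int n = 1" using d by (metis of_nat_mod of_nat_mult of_nat_1)
  have "((int i - int d) * int m) mod int n = (r - 1) mod int n"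
  proof -
    have "((int i - int d) * int m) mod int n = (int i * int m - int d * int m) mod int n"
      by (simp add: algebra_simps)
    also have "\<dots> = ((int i * int m) mod int n - (int d * int m) mod int n) mod int n"
      by (simp add: mod_diff_eq)
    finally show ?thesis unfolding dm r_def .
  qed
  also have "\<dots> = r - 1" using r0 \<open>r \<noteq> 0\<close> by simp
  finally have e: "((int i - int d) * int m) mod int n = r - 1" .
  have "r = int l" using ne e unfolding Fseq_def r_def[symmetric]
    by (auto split: if_splits)
  then have im: "(int i * int m) mod int n = int l" unfolding r_def .
  have "int i mod int n = (int i * (int m * int d)) mod int n"
    by (metis dm mod_mult_right_eq mult.commute mult.right_neutral)
  also have "\<dots> = ((int i * int m) mod int n * int d) mod int n"
    by (metis mod_mult_left_eq mult.assoc)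
  also have "\<dots> = (int l * int d) mod int n" unfolding im ..
  finally have "int i mod int n = (int l * int d) mod int n" .
  then have "int i = int ((l * d) mod n)" using i by (simp add: zmod_int)
  then show ?thesis by simp
qed

theorem proposition5p3:
  fixes AL :: "real mat" and C B :: "real vec" and \<mu> :: real and N l m n :: nat
    and y :: "nat \<Rightarrow> real vec"
  assumes "N \<ge> 2"
    and "AL \<in> carrier_mat N N" and "C \<in> carrier_vec N" and "B \<in> carrier_vec N"
    and "shrinking_point AL C B \<mu> N l m n"
    and "is_cycle AL C B \<mu> N (flipS (Fseq l m n) n 0) n y"
  shows "is_cycle AL C B \<mu> N (Fseq l m n) n y
       \<and> is_cycle AL C B \<mu> N (shiftS (Fseq l m n) (- int (inv_mod m n))) n y
       \<and> det (1\<^sub>m N - Mmat AL C N (Fseq l m n) n) = 0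
       \<and> (\<forall>i::int. det (Pmat AL C N (shiftS (Fseq l m n) i) n) = 0)"
proof -
  note AL = assms(2) and Cc = assms(3) and Bc = assms(4) and ycyc = assms(6)
  define S where "S = Fseq l m n"
  define d where "d = inv_mod m n"
  define S0 where "S0 = flipS S n 0"
  have N0: "0 < N" using assms(1) by simp
  have sp: "0 < m" "m < n" "coprime m n" "2 \<le> l" "l + 2 \<le> n" "\<mu> \<noteq> 0" "rhoT AL N \<bullet> B \<noteq> 0"
    "det (1\<^sub>m N - Mmat AL C N S0 n) \<noteq> 0"
    using assms(5) unfolding shrinking_point_def Let_def S_def d_def S0_def by auto
  obtain y' where y': "is_cycle AL C B \<mu> N S0 n y'"
    "\<forall>i<n. y' i $ 0 = 0 \<longleftrightarrow> (i mod n = 0 \<or> i mod n = (l * d) mod n)"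
    using assms(5) unfolding shrinking_point_def Let_def S_def d_def S0_def by auto
  have n0: "0 < n" and n3: "3 \<le> n" using sp by auto
  have dspec: "d < n" "(d * m) mod n = 1" using inv_mod_spec[OF sp(3) sp(1)] n3 unfolding d_def by auto
  have y0: "is_cycle AL C B \<mu> N S0 n y" using ycyc unfolding S0_def S_def .
  have yy': "\<forall>i<n. y i = y' i" using cycle_unique[OF AL Cc Bc y0 y'(1) n0 sp(8)] .
  have zero: "y i $ 0 = 0 \<longleftrightarrow> (i = 0 \<or> i = (l * d) mod n)" if "i < n" for i
    using y'(2) yy' that by simp
  have per: "\<forall>i j. i mod int n = j mod int n \<longrightarrow> S i = S j" unfolding S_def using Fseq_per by blast
  have S0eq: "S0 (int i) = S (int i)" if "i < n" "i \<noteq> 0" for i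
    unfolding S0_def flipS_def using that by auto
  have yS: "is_cycle AL C B \<mu> N S n y"
  proof (rule cycle_change[OF AL Cc N0 y0])
    show "\<forall>i<n. S (int i) \<noteq> S0 (int i) \<longrightarrow> y i $ 0 = 0"
    proof (intro allI impI)
      fix i assume i: "i < n" "S (int i) \<noteq> S0 (int i)"
      then have "i = 0" using S0eq[of i] by (cases "i = 0") auto
      then show "y i $ 0 = 0" using zero n0 by auto
    qed
  qed
  have yd: "is_cycle AL C B \<mu> N (shiftS S (- int d)) n y"
  proof (rule cycle_change[OF AL Cc N0 y0], intro allI impI)
    fix i assume i: "i < n" and ne: "shiftS S (- int d) (int i) \<noteq> S0 (int i)"
    show "y i $ 0 = 0"
    proof (cases "i = 0")
      case True then show ?thesis using zero n0 by auto
    next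
      case False
      have "Fseq l m n (int i - int d) \<noteq> Fseq l m n (int i)"
        using ne S0eq[OF i False] unfolding shiftS_def S_def by simp
      moreover have "1 < n" "l < n" using n3 sp(5) by auto
      ultimately have "i = (l * d) mod n" using F_shift_diff[OF dspec(2) sp(3) _ _ i False] by blast
      then show ?thesis using zero i by auto
    qed
  qed
  define z where "z = (\<lambda>k. y ((k + d) mod n))"
  have zS: "is_cycle AL C B \<mu> N S n z"
  proof -
    have e: "shiftS S (- int d + int d) = S" by (simp add: shiftS_def)
    show ?thesis using cycle_shift[OF per n0 yd, of d] unfolding e z_def .
  qed
  have distinct: "\<exists>k<n. y k \<noteq> z k"
  proof (rule ccontr)
    assume "\<not> ?thesis"
    then have H: "\<forall>k<n. y k = y ((k + d) mod n)" unfolding z_def by blast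
    have J: "y k = y ((k + j * d) mod n)" if "k < n" for j k
    proof (induction j)
      case 0 then show ?case using that by simp
    next
      case (Suc j)
      have "(k + j * d) mod n < n" using n0 by simp
      then have "y ((k + j * d) mod n) = y (((k + j * d) mod n + d) mod n)" using H by blast
      also have "((k + j * d) mod n + d) mod n = (k + j * d + d) mod n"
        by (rule mod_add_left_eq)
      also have "k + j * d + d = k + Suc j * d" by simp
      finally show ?case using Suc by simp
    qed
    have step: "y k = y ((k + 1) mod n)" if "k < n" for k
    proof -
      have "(k + m * d) mod n = (k + 1) mod n"
        using dspec(2) by (metis mod_add_right_eq mult.commute)
      then show ?thesis using J[OF that, of m] by simp
    qed
    have "y 1 = y 0" using step[of 0] n3 by simp
    moreover have "y 2 = y 1" using step[of 1] n3 by (simp add: numeral_2_eq_2)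
    moreover have "y 0 $ 0 = 0" using zero n0 by simp
    ultimately have "y 1 $ 0 = 0" "y 2 $ 0 = 0" by auto
    then have "1 = (l * d) mod n" "2 = (l * d) mod n" using zero[of 1] zero[of 2] n3 by auto
    then show False by simp
  qed
  then obtain k0 where k0: "k0 < n" "y k0 \<noteq> z k0" by auto
  have ii: "det (1\<^sub>m N - Mmat AL C N S n) = 0"
    using two_cycles_P[OF AL Cc Bc N0 n0 sp(6) sp(7) yS zS k0] by simp
  have iii: "det (Pmat AL C N (shiftS S i) n) = 0" for i :: int
  proof -
    define b where "b = nat (i mod int n)"
    have m0: "0 \<le> i mod int n" "i mod int n < int n" using n0 by auto
    have b: "b < n" "int b = i mod int n" unfolding b_def using m0 by (auto simp: nat_less_iff)
    have sh: "shiftS S (0 + int b) = shiftS S i"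
    proof
      fix j
      have "(j + (0 + int b)) mod int n = (j + i) mod int n"
        using b(2) by (simp add: mod_add_right_eq)
      then show "shiftS S (0 + int b) j = shiftS S i j"
        unfolding shiftS_def using per[rule_format, of "j + (0 + int b)" "j + i"] by simp
    qed
    have S_0: "shiftS S 0 = S" unfolding shiftS_def by simp
    have c1: "is_cycle AL C B \<mu> N (shiftS S i) n (\<lambda>k. y ((k + b) mod n))"
      using cycle_shift[OF per n0, of AL C B \<mu> N 0 y b] yS unfolding S_0 sh by blast
    have c2: "is_cycle AL C B \<mu> N (shiftS S i) n (\<lambda>k. z ((k + b) mod n))"
      using cycle_shift[OF per n0, of AL C B \<mu> N 0 z b] zS unfolding S_0 sh by blast
    define k' where "k' = (k0 + n - b) mod n"
    have k': "k' < n" "(k' + b) mod n = k0" unfolding k'_def using n0 b k0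
      by (auto simp: mod_add_left_eq)
    have "y ((k' + b) mod n) \<noteq> z ((k' + b) mod n)" using k' k0 by simp
    then show ?thesis using two_cycles_P[OF AL Cc Bc N0 n0 sp(6) sp(7) c1 c2 k'(1)] by simp
  qed
  show ?thesis using yS yd ii iii unfolding S_def d_def by blast
qed

end
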